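(* Let $l\geq 2$ be an integer and set $Q(\lambda,R):=P_l(\lambda,R-\lambda)$. Then $Q$ is a polynomial that contains the monomials $\lambda^l$ and $R$ with non-zero coefficients and contains no monomials $\lambda^k$ with $k\neq l$.
   Context: For $l\in\mathbb N$ and $\mu\in\mathbb C$, $H_l$ is the tridiagonal $l\times l$ matrix with entries $H_{l;jj}=(1-j)(l-j+1)$, $H_{l;j,j+1}=\mu j$, $H_{l;j,j-1}=\mu(l-j+1)$, and $H_{l;ij}=0$ if $|i-j|\geq 2$; $\det(H_l+\lambda\,\mathrm{Id})$ is a polynomial of degree $l$ in $(\lambda,\mu^2)$, written $P_l(\lambda,\mu^2)$. Thus $Q(\lambda,R)$ is $\det(H_l+\lambda\,\mathrm{Id})$ after the substitution $\mu^2=R-\lambda$. *)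

theory Defs
  imports "Jordan_Normal_Form.Determinant" "HOL-Computational_Algebra.Polynomial"
begin

text \<open>The tridiagonal l x l matrix H_l (paper indices j = 1..l correspond to
  0-based indices i = j - 1).\<close>
definition H_mat :: "nat \<Rightarrow> complex \<Rightarrow> complex mat" where
  "H_mat l \<mu> = mat l l (\<lambda>(i, k).
     let j = i + 1 in
     if k = i then (1 - of_nat j) * (of_nat l - of_nat j + 1)
     else if k = i + 1 then \<mu> * of_nat j
     else if k + 1 = i then \<mu> * (of_nat l - of_nat j + 1)
     else 0)"

text \<open>Bivariate polynomials in (lambda, R): a polynomial in lambda whose
  coefficients are polynomials in R.\<close>
definition eval2 :: "complex poly poly \<Rightarrow> complex \<Rightarrow> complex \<Rightarrow> complex" where
  "eval2 Q x r = poly (map_poly (\<lambda>c. poly c r) Q) x"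

definition coeff2 :: "complex poly poly \<Rightarrow> nat \<Rightarrow> nat \<Rightarrow> complex" where
  "coeff2 Q i j = coeff (coeff Q i) j"

end

theory Submission
  imports Defs
begin

lemma tri_det:
  fixes g :: "nat \<Rightarrow> nat \<Rightarrow> 'a::comm_ring_1"
  assumes band1: "\<And>i j. i + 1 < j \<Longrightarrow> g i j = 0"
      and band2: "\<And>i j. j + 1 < i \<Longrightarrow> g i j = 0"
  shows "det (mat (Suc (Suc k)) (Suc (Suc k)) (\<lambda>(i,j). g i j)) =
    g (Suc k) (Suc k) * det (mat (Suc k) (Suc k) (\<lambda>(i,j). g i j))
    - g (Suc k) k * g k (Suc k) * det (mat k k (\<lambda>(i,j). g i j))"
proof -
  define A where "A = mat (Suc (Suc k)) (Suc (Suc k)) (\<lambda>(i,j). g i j)"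
  define B where "B = mat_delete A (Suc k) k"
  have A: "A \<in> carrier_mat (Suc (Suc k)) (Suc (Suc k))" by (simp add: A_def)
  have B: "B \<in> carrier_mat (Suc k) (Suc k)" by (simp add: B_def A_def mat_delete_def)
  have "det A = (\<Sum>j<Suc (Suc k). A $$ (Suc k, j) * cofactor A (Suc k) j)"
    by (rule laplace_expansion_row[OF A]) simp
  also have "\<dots> = A $$ (Suc k, k) * cofactor A (Suc k) k + A $$ (Suc k, Suc k) * cofactor A (Suc k) (Suc k)"
  proof -
    have "(\<Sum>j<k. A $$ (Suc k, j) * cofactor A (Suc k) j) = 0"
      by (rule sum.neutral) (auto simp: A_def band2)
    then show ?thesis by simp
  qed
  finally have 1: "det A = A $$ (Suc k, k) * cofactor A (Suc k) k + A $$ (Suc k, Suc k) * cofactor A (Suc k) (Suc k)" .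
  have 2: "mat_delete A (Suc k) (Suc k) = mat (Suc k) (Suc k) (\<lambda>(i,j). g i j)"
    by (rule eq_matI) (auto simp: A_def mat_delete_def)
  have "det B = (\<Sum>i<Suc k. B $$ (i,k) * cofactor B i k)"
    by (rule laplace_expansion_column[OF B]) simp
  also have "\<dots> = B $$ (k,k) * cofactor B k k"
  proof -
    have "(\<Sum>i<k. B $$ (i,k) * cofactor B i k) = 0"
      by (rule sum.neutral) (auto simp: B_def A_def mat_delete_def band1)
    then show ?thesis by simp
  qed
  finally have 3: "det B = B $$ (k,k) * cofactor B k k" .
  have 4: "mat_delete B k k = mat k k (\<lambda>(i,j). g i j)"
    by (rule eq_matI) (auto simp: B_def A_def mat_delete_def)
  have 5: "B $$ (k,k) = g k (Suc k)" by (simp add: B_def A_def mat_delete_def)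
  have s1: "(-1::'a)^(Suc k + k) = - 1" by (simp add: power_add)
  have s2: "(-1::'a)^(k + k) = 1" by (simp add: power_add)
  have s3: "(-1::'a)^(Suc k + Suc k) = 1" by (simp add: power_add)
  show ?thesis
    using 1 3 unfolding cofactor_def 2 4 5 s1 s2 s3 B_def[symmetric] A_def[symmetric]
    by (simp add: A_def algebra_simps)
qed


lemma eval2_alt: "eval2 Q x r = poly (poly Q [:x:]) r"
  unfolding eval2_def
  by (induction Q) (simp_all add: map_poly_pCons)

definition cc :: "nat \<Rightarrow> nat \<Rightarrow> complex" where
  "cc l k = of_nat (k+1) * (of_nat l - of_nat (k+2) + 1)"

fun FF :: "nat \<Rightarrow> nat \<Rightarrow> complex poly poly" where
  "FF l 0 = 1"
| "FF l (Suc 0) = [:0, 1:]"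
| "FF l (Suc (Suc k)) = [:[:- cc l k:], 1:] * FF l (Suc k) - [:[:0, cc l k:], [:- cc l k:]:] * FF l k"

definition gg :: "nat \<Rightarrow> complex \<Rightarrow> complex \<Rightarrow> nat \<Rightarrow> nat \<Rightarrow> complex" where
  "gg l \<mu> x i k = (let j = i + 1 in
     if k = i then (1 - of_nat j) * (of_nat l - of_nat j + 1)
     else if k = i + 1 then \<mu> * of_nat j
     else if k + 1 = i then \<mu> * (of_nat l - of_nat j + 1)
     else 0) + (if i = k then x else 0)"

lemma H_eq: "H_mat l m + x \<cdot>\<^sub>m 1\<^sub>m l = mat l l (\<lambda>(i,j). gg l m x i j)"
  by (rule eq_matI) (auto simp: H_mat_def gg_def Let_def)

lemma det_FF: "det (mat k k (\<lambda>(i,j). gg l m x i j)) = eval2 (FF l k) x (m\<^sup>2 + x)"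
proof (induction l k rule: FF.induct)
  case (1 l)
  then show ?case by (simp add: eval2_alt)
next
  case (2 l)
  then show ?case by (subst det_single) (auto simp: eval2_alt gg_def)
next
  case (3 l k)
  have "det (mat (Suc (Suc k)) (Suc (Suc k)) (\<lambda>(i,j). gg l m x i j)) =
    gg l m x (Suc k) (Suc k) * det (mat (Suc k) (Suc k) (\<lambda>(i,j). gg l m x i j))
    - gg l m x (Suc k) k * gg l m x k (Suc k) * det (mat k k (\<lambda>(i,j). gg l m x i j))"
    by (rule tri_det) (auto simp: gg_def Let_def)
  also have "\<dots> = eval2 (FF l (Suc (Suc k))) x (m\<^sup>2 + x)"
    unfolding 3
    by (simp add: eval2_alt gg_def Let_def cc_def algebra_simps power2_eq_square)
  finally show ?case .
qed

lemma FF_R0: "map_poly (\<lambda>c. poly c 0) (FF l k) = [:0,1:] ^ k"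
proof -
  have "poly (map_poly (\<lambda>c. poly c 0) (FF l k)) x = x ^ k" for x
  proof (induction l k rule: FF.induct)
    case (3 l k)
    then show ?case
      by (simp add: eval2_def[symmetric] eval2_alt algebra_simps)
  qed (simp_all add: eval2_def[symmetric] eval2_alt)
  then show ?thesis by (intro poly_eq_poly_eq_iff[THEN iffD1]) auto
qed


lemma coeff_X_pow: "coeff ([:0,1:] ^ n :: 'a::comm_semiring_1 poly) k = (if k = n then 1 else 0)"
  using coeff_monom[of "1::'a" n k] by (simp add: monom_altdef)

lemma G_rec: "coeff (FF l (Suc (Suc k))) 0 =
   - smult (cc l k) (coeff (FF l (Suc k)) 0) - pCons 0 (smult (cc l k) (coeff (FF l k) 0))"
  by (simp add: coeff_mult_0 algebra_simps)

lemma G0: "k \<ge> 1 \<Longrightarrow> coeff (coeff (FF l k) 0) 0 = 0"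
proof (induction l k rule: FF.induct)
  case (3 l k)
  then show ?case by (cases k) (simp_all add: G_rec)
qed simp_all

lemma cc_nz: "k + 2 \<le> l \<Longrightarrow> cc l k \<noteq> 0"
proof -
  assume a: "k + 2 \<le> l"
  then obtain d where d: "l = k + 2 + d" using le_Suc_ex by blast
  have "cc l k = of_nat ((k+1) * (d+1))" unfolding cc_def d by (simp add: algebra_simps)
  moreover have "(of_nat ((k+1) * (d+1)) :: complex) \<noteq> 0" by (simp only: of_nat_eq_0_iff) simp
  ultimately show ?thesis by simp
qed

lemma G1: "k + 2 \<le> l \<Longrightarrow> coeff (coeff (FF l (k+2)) 0) 1 \<noteq> 0"
proof (induction k)
  case 0
  then show ?case using cc_nz[of 0 l] by (simp add: G_rec numeral_2_eq_2)
next
  case (Suc k)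
  have "coeff (coeff (FF l (Suc k + 2)) 0) 1 = - cc l (Suc k) * coeff (coeff (FF l (k + 2)) 0) 1"
    using G0[of "Suc k" l] by (simp add: G_rec numeral_2_eq_2)
  then show ?case using Suc cc_nz[of "Suc k" l] by simp
qed

theorem proposition2p1:
  fixes l :: nat
  assumes "l \<ge> 2"
  shows "\<exists>Q :: complex poly poly.
           (\<forall>x m :: complex. det (H_mat l m + x \<cdot>\<^sub>m 1\<^sub>m l) = eval2 Q x (m\<^sup>2 + x))
         \<and> coeff2 Q l 0 \<noteq> 0
         \<and> coeff2 Q 0 1 \<noteq> 0
         \<and> (\<forall>k. k \<noteq> l \<longrightarrow> coeff2 Q k 0 = 0)"
proof (intro exI[of _ "FF l l"] conjI allI impI)
  fix x m :: complex
  show "det (H_mat l m + x \<cdot>\<^sub>m 1\<^sub>m l) = eval2 (FF l l) x (m\<^sup>2 + x)"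
    unfolding H_eq det_FF ..
next
  have c: "coeff2 (FF l l) k 0 = (if k = l then 1 else 0)" for k
  proof -
    have "coeff2 (FF l l) k 0 = coeff (map_poly (\<lambda>c. poly c 0) (FF l l)) k"
      by (simp add: coeff2_def coeff_map_poly poly_0_coeff_0)
    then show ?thesis unfolding FF_R0 coeff_X_pow .
  qed
  show "coeff2 (FF l l) l 0 \<noteq> 0" using c by simp
  show "coeff2 (FF l l) k 0 = 0" if "k \<noteq> l" for k using c that by simp
next
  obtain k where k: "l = k + 2" using assms by (metis add.commute le_Suc_ex)
  show "coeff2 (FF l l) 0 1 \<noteq> 0"
    unfolding coeff2_def using G1[of k l] k by simp
qed

end
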